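(* Consider the patient model in the context with actions from an $(r,k)$-exploratory policy. Fix $i\in\{1,\dots,M\}$, let $N_i:=\sum_{t=1}^T\mathbf 1_{\{u_t=e_i\}}$, $\underline p:=\sigma(-C_x-\bar\mu)$ with $C_x:=\frac{\bar b+\bar c+\bar w}{1-\bar a}$, and let $\hat\mu_i:=\arg\max_{\mu_i\in[-\bar\mu,\bar\mu]}\sum_{t=1}^T\mathbf 1_{\{u_t=e_i\}}[d^i_t\log\sigma(x_t+\mu_i)+(1-d^i_t)\log(1-\sigma(x_t+\mu_i))]$. Then for $\delta\in(0,1)$, $$\mathbf P\Big(|\hat\mu_i-\mu^*_i|\leq\frac{\sqrt{2T\log(2/\delta)}}{N_i\underline p^2}\Big)\geq1-\delta.$$
   Context: Patient model: $M\geq1$ treatments; $\mathcal U:=\{v\in\{0,1\}^M:\|v\|_0\leq1\}$, $e_i$ basis vectors. $x_{t+1}=ax_t+b^\top u_t+c^\top d_t+w_t$, adherence $d^i_t\mid x_t,u^i_t\sim\mathrm{Bernoulli}(u^i_t\sigma(x_t+\mu^*_i))$, $\sigma$ the sigmoid; $x_1$ distributed as the noise. Parameters $a\in[0,\bar a]$ (known $\bar a\in(0,1)$), $\|b\|_\infty\leq\bar b$, $\|c\|_\infty\leq\bar c$, true shifts $\mu^*\in[-\bar\mu,\bar\mu]^M$ ($\bar\mu>0$ known). $x_t,u_t,d_t$ fully observed. Noise i.i.d., zero-symmetric, $\sigma_s^2$-subgaussian, $|w_t|\leq\bar w$ ($\bar w>0$), log-concave density, known variance $\sigma_w^2>0$.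 With $\mathcal F_t:=\sigma(x_{0:t},u_{0:t},d_{0:t},w_{0:t})$, an $(r,k)$-exploratory policy ($r\in(0,1]$, $k\in\mathbb N$) is one that in every block $\{j+1,\dots,j+k\}$, $j\geq0$, almost surely takes at least $\lceil rk\rceil$ actions drawn uniformly from $\mathcal U$ independently of $\mathcal F_{t-1}$. If $N_i=0$ the bound is interpreted as $+\infty$. *)

theory Defs
  imports "HOL-Probability.Probability"
begin

definition sigmoid :: "real \<Rightarrow> real" where
  "sigmoid z = 1 / (1 + exp (- z))"

text \<open>Basis vector e_i (0-based index i; components indexed by nat, zero outside).\<close>
definition basis_vec :: "nat \<Rightarrow> nat \<Rightarrow> real" where
  "basis_vec i = (\<lambda>j. if j = i then 1 else 0)"

definition action_set :: "nat \<Rightarrow> (nat \<Rightarrow> real) set" where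
  "action_set M = {v. (\<forall>j. v j \<in> {0,1}) \<and> (\<forall>j\<ge>M. v j = 0) \<and> card {j. v j \<noteq> 0} \<le> 1}"

definition gen_sigma :: "'a measure \<Rightarrow> ('a \<Rightarrow> real) set \<Rightarrow> 'a set set" where
  "gen_sigma P Xs = sigma_sets (space P) (\<Union>X\<in>Xs. {X -` B \<inter> space P | B. B \<in> sets borel})"

text \<open>Generators of F_t = sigma(x_{1:t}, u_{1:t}, d_{1:t}, w_{1:t}); F_0 is trivial.\<close>
definition hist_vars ::
  "nat \<Rightarrow> (nat \<Rightarrow> 'a \<Rightarrow> real) \<Rightarrow> (nat \<Rightarrow> 'a \<Rightarrow> nat \<Rightarrow> real) \<Rightarrow> (nat \<Rightarrow> 'a \<Rightarrow> nat \<Rightarrow> real)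
   \<Rightarrow> (nat \<Rightarrow> 'a \<Rightarrow> real) \<Rightarrow> nat \<Rightarrow> ('a \<Rightarrow> real) set" where
  "hist_vars M x u d w t =
     {x s | s. 1 \<le> s \<and> s \<le> t}
   \<union> {(\<lambda>\<omega>. u s \<omega> j) | s j. 1 \<le> s \<and> s \<le> t \<and> j < M}
   \<union> {(\<lambda>\<omega>. d s \<omega> j) | s j. 1 \<le> s \<and> s \<le> t \<and> j < M}
   \<union> {w s | s. 1 \<le> s \<and> s \<le> t}"

definition past_vars ::
  "nat \<Rightarrow> (nat \<Rightarrow> 'a \<Rightarrow> real) \<Rightarrow> (nat \<Rightarrow> 'a \<Rightarrow> nat \<Rightarrow> real) \<Rightarrow> (nat \<Rightarrow> 'a \<Rightarrow> nat \<Rightarrow> real)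
   \<Rightarrow> (nat \<Rightarrow> 'a \<Rightarrow> real) \<Rightarrow> nat \<Rightarrow> ('a \<Rightarrow> real) set" where
  "past_vars M x u d w t = hist_vars M x u d w (t - 1) \<union> {x t}"

definition log_concave :: "(real \<Rightarrow> real) \<Rightarrow> bool" where
  "log_concave f \<longleftrightarrow> (\<forall>y z \<theta>. 0 < \<theta> \<and> \<theta> < 1 \<longrightarrow>
      f y powr \<theta> * f z powr (1 - \<theta>) \<le> f (\<theta> * y + (1 - \<theta>) * z))"

definition count_treat :: "(nat \<Rightarrow> 'a \<Rightarrow> nat \<Rightarrow> real) \<Rightarrow> nat \<Rightarrow> nat \<Rightarrow> 'a \<Rightarrow> real" where
  "count_treat u T i \<omega> = (\<Sum>t=1..T. if u t \<omega> = basis_vec i then 1 else 0)"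

definition loglik ::
  "(nat \<Rightarrow> 'a \<Rightarrow> real) \<Rightarrow> (nat \<Rightarrow> 'a \<Rightarrow> nat \<Rightarrow> real) \<Rightarrow> (nat \<Rightarrow> 'a \<Rightarrow> nat \<Rightarrow> real)
   \<Rightarrow> nat \<Rightarrow> nat \<Rightarrow> 'a \<Rightarrow> real \<Rightarrow> real" where
  "loglik x u d T i \<omega> m = (\<Sum>t=1..T. (if u t \<omega> = basis_vec i then 1 else 0) *
      (d t \<omega> i * ln (sigmoid (x t \<omega> + m)) + (1 - d t \<omega> i) * ln (1 - sigmoid (x t \<omega> + m))))"

end

theory Submission
  imports Defs
begin


lemma sig_pos: "0 < sigmoid z" unfolding sigmoid_def by (simp add: add_pos_pos)
lemma sig_lt1: "sigmoid z < 1" unfolding sigmoid_def by (simp add: add_pos_pos)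
lemma sig_compl: "1 - sigmoid z = sigmoid (- z)"
proof -
  have p: "0 < 1 + exp z" "0 < 1 + exp (-z)" by (auto intro: add_pos_pos)
  have "exp (-z) * exp z = 1" by (simp add: exp_minus)
  then show ?thesis unfolding sigmoid_def using p by (simp add: field_simps)
qed
lemma sig_strict_mono: "a < b \<Longrightarrow> sigmoid a < sigmoid b"
  unfolding sigmoid_def by (simp add: add_pos_pos frac_less2)
lemma sig_mono: "a \<le> b \<Longrightarrow> sigmoid a \<le> sigmoid b"
  using sig_strict_mono[of a b] by (cases "a = b") auto

lemma sig_deriv: "(sigmoid has_real_derivative (sigmoid z * (1 - sigmoid z))) (at z)"
proof -
  have "((\<lambda>z. 1 / (1 + exp (- z))) has_real_derivative (exp (-z) / (1 + exp (-z))^2)) (at z)"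
    using add_pos_pos[OF zero_less_one exp_gt_zero[of "-z"]]
    by (auto intro!: derivative_eq_intros simp: field_simps power2_eq_square)
  moreover have "exp (-z) / (1 + exp (-z))^2 = sigmoid z * (1 - sigmoid z)"
  proof -
    have p: "1 + exp (-z) \<noteq> 0" using add_pos_pos[OF zero_less_one exp_gt_zero[of "-z"]] by simp
    show ?thesis unfolding sigmoid_def using p by (simp add: field_simps power2_eq_square)
  qed
  ultimately show ?thesis unfolding sigmoid_def[abs_def] by simp
qed

lemma ell_deriv:
  "((\<lambda>m. dd * ln (sigmoid (z + m)) + (1 - dd) * ln (1 - sigmoid (z + m)))
     has_real_derivative (dd - sigmoid (z + m))) (at m)"
proof -
  have s: "((\<lambda>m. sigmoid (z + m)) has_real_derivative (sigmoid (z+m) * (1 - sigmoid (z+m)))) (at m)"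
  proof -
    have "((\<lambda>m. z + m) has_real_derivative 1) (at m)" by (auto intro!: derivative_eq_intros)
    from DERIV_chain2[OF sig_deriv this] show ?thesis by simp
  qed
  have "((\<lambda>m. dd * ln (sigmoid (z + m)) + (1 - dd) * ln (1 - sigmoid (z + m)))
     has_real_derivative (dd * ((sigmoid (z+m) * (1 - sigmoid (z+m))) / sigmoid (z+m))
        + (1 - dd) * (- (sigmoid (z+m) * (1 - sigmoid (z+m))) / (1 - sigmoid (z+m))))) (at m)"
    using sig_pos[of "z+m"] sig_lt1[of "z+m"]
    by (auto intro!: derivative_eq_intros s)
  moreover have "dd * ((sigmoid (z+m) * (1 - sigmoid (z+m))) / sigmoid (z+m))
        + (1 - dd) * (- (sigmoid (z+m) * (1 - sigmoid (z+m))) / (1 - sigmoid (z+m))) = dd - sigmoid (z+m)"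
    using sig_pos[of "z+m"] sig_lt1[of "z+m"] by (simp add: field_simps)
  ultimately show ?thesis by simp
qed

lemma sig_lower:
  assumes "\<bar>a\<bar> \<le> K" "\<bar>b\<bar> \<le> K"
  shows "(sigmoid (-K))^2 * (a - b)^2 \<le> (sigmoid a - sigmoid b) * (a - b)"
proof (cases "a = b")
  case True then show ?thesis by simp
next
  case False
  have gen: "(sigmoid (-K))^2 * (a - b)^2 \<le> (sigmoid a - sigmoid b) * (a - b)"
    if ab: "b < a" "\<bar>a\<bar> \<le> K" "\<bar>b\<bar> \<le> K" for a b
  proof -
    obtain z where z: "b < z" "z < a" "sigmoid a - sigmoid b = (a - b) * (sigmoid z * (1 - sigmoid z))"
      using MVT2[of b a sigmoid "\<lambda>z. sigmoid z * (1 - sigmoid z)"] ab sig_deriv by blast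
    have "sigmoid (-K) \<le> sigmoid z" using z ab by (intro sig_mono) auto
    moreover have "sigmoid (-K) \<le> 1 - sigmoid z" unfolding sig_compl using z ab by (intro sig_mono) auto
    ultimately have "sigmoid (-K) * sigmoid (-K) \<le> sigmoid z * (1 - sigmoid z)"
      using sig_pos[of "-K"] by (intro mult_mono) auto
    then have "sigmoid (-K) * sigmoid (-K) * ((a-b)*(a-b)) \<le> sigmoid z * (1 - sigmoid z) * ((a-b)*(a-b))"
      by (intro mult_right_mono) auto
    moreover have "(sigmoid a - sigmoid b) * (a - b) = sigmoid z * (1 - sigmoid z) * ((a-b)*(a-b))"
      by (simp add: z(3) mult_ac)
    ultimately show ?thesis unfolding power2_eq_square by linarith
  qed
  show ?thesis
  proof (cases "b < a")
    case True then show ?thesis using gen assms by blast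
  next
    case False then have "a < b" using \<open>a \<noteq> b\<close> by auto
    then show ?thesis using gen[of a b] assms by (simp add: power2_commute algebra_simps)
  qed
qed



lemma foc:
  fixes f f' :: "real \<Rightarrow> real"
  assumes der: "\<And>m. (f has_real_derivative f' m) (at m)"
    and mu: "mu \<in> {lo..hi}" and mx: "\<forall>m\<in>{lo..hi}. f m \<le> f mu" and m: "m \<in> {lo..hi}"
  shows "f' mu * (m - mu) \<le> 0"
proof (rule ccontr)
  assume "\<not> ?thesis"
  then have pos: "f' mu * (m - mu) > 0" by simp
  show False
  proof (cases "m > mu")
    case True
    then have "f' mu > 0" using pos by (simp add: zero_less_mult_iff)
    from DERIV_pos_inc_right[OF der this] obtain e where e: "e > 0" "\<forall>h>0. h < e \<longrightarrow> f mu < f (mu + h)" by blast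
    define h where "h = min (e/2) (m - mu)"
    have "h > 0" "h < e" using e True by (auto simp: h_def)
    then have "f mu < f (mu + h)" using e by blast
    moreover have "mu + h \<in> {lo..hi}" using mu m True \<open>h>0\<close> by (auto simp: h_def)
    ultimately show False using mx by fastforce
  next
    case False
    then have "m < mu" using pos by (cases "m = mu") auto
    then have "f' mu < 0" using pos by (simp add: zero_less_mult_iff)
    from DERIV_neg_dec_left[OF der this] obtain e where e: "e > 0" "\<forall>h>0. h < e \<longrightarrow> f mu < f (mu - h)" by blast
    define h where "h = min (e/2) (mu - m)"
    have "h > 0" "h < e" using e \<open>m < mu\<close> by (auto simp: h_def)
    then have "f mu < f (mu - h)" using e by blast
    moreover have "mu - h \<in> {lo..hi}" using mu m \<open>m < mu\<close> \<open>h>0\<close> by (auto simp: h_def)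
    ultimately show False using mx by fastforce
  qed
qed

definition LL :: "nat \<Rightarrow> (nat \<Rightarrow> real) \<Rightarrow> (nat \<Rightarrow> real) \<Rightarrow> (nat \<Rightarrow> real) \<Rightarrow> real \<Rightarrow> real" where
  "LL T c dd z m = (\<Sum>t=1..T. c t * (dd t * ln (sigmoid (z t + m)) + (1 - dd t) * ln (1 - sigmoid (z t + m))))"
definition LD :: "nat \<Rightarrow> (nat \<Rightarrow> real) \<Rightarrow> (nat \<Rightarrow> real) \<Rightarrow> (nat \<Rightarrow> real) \<Rightarrow> real \<Rightarrow> real" where
  "LD T c dd z m = (\<Sum>t=1..T. c t * (dd t - sigmoid (z t + m)))"

lemma LL_deriv: "(LL T c dd z has_real_derivative LD T c dd z m) (at m)"
  unfolding LL_def[abs_def] LD_def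
  by (intro DERIV_sum DERIV_cmult ell_deriv)

lemma LD_diff: "LD T c dd z a - LD T c dd z b = (\<Sum>t=1..T. c t * (sigmoid (z t + b) - sigmoid (z t + a)))"
  unfolding LD_def sum_subtractf[symmetric] by (intro sum.cong) (auto simp: algebra_simps)

lemma LD_strict:
  assumes c: "\<forall>t. c t \<in> {0,1}" and t: "t0 \<in> {1..T}" "c t0 = 1" and ab: "a < b"
  shows "LD T c dd z b < LD T c dd z a"
proof -
  have "0 < (\<Sum>t=1..T. c t * (sigmoid (z t + b) - sigmoid (z t + a)))"
  proof (rule sum_pos2[OF _ t(1)])
    show "0 < c t0 * (sigmoid (z t0 + b) - sigmoid (z t0 + a))" using t ab sig_strict_mono[of "z t0 + a" "z t0 + b"] by simp
    show "0 \<le> c i * (sigmoid (z i + b) - sigmoid (z i + a))" if "i \<in> {1..T}" for i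
    proof -
      show "0 \<le> c i * (sigmoid (z i + b) - sigmoid (z i + a))"
        using c[rule_format, of i] ab sig_mono[of "z i + a" "z i + b"] by auto
    qed
  qed simp
  then show ?thesis using LD_diff[of T c dd z a b] by linarith
qed

lemma main_bound:
  assumes c: "\<forall>t. c t \<in> {0,1}" and zb: "\<forall>t\<in>{1..T}. c t \<noteq> 0 \<longrightarrow> \<bar>z t\<bar> \<le> C"
    and ms: "ms \<in> {-mb..mb}" and mh: "mh \<in> {-mb..mb}"
    and mx: "\<forall>m\<in>{-mb..mb}. LL T c dd z m \<le> LL T c dd z mh"
  shows "(\<Sum>t=1..T. c t) * (sigmoid (- C - mb))^2 * \<bar>mh - ms\<bar> \<le> \<bar>LD T c dd z ms\<bar>"
proof -
  define D where "D = mh - ms"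
  define p2 where "p2 = (sigmoid (- C - mb))^2"
  have trm: "c t * p2 * D^2 \<le> c t * ((sigmoid (z t + mh) - sigmoid (z t + ms)) * D)" if "t \<in> {1..T}" for t
  proof (cases "c t = 0")
    case True then show ?thesis by simp
  next
    case False
    then have ct: "c t = 1" using c by auto
    have "\<bar>z t\<bar> \<le> C" using zb that False by auto
    then have "p2 * ((z t + mh) - (z t + ms))^2 \<le> (sigmoid (z t + mh) - sigmoid (z t + ms)) * ((z t + mh) - (z t + ms))"
      unfolding p2_def using ms mh sig_lower[of "z t + mh" "C + mb" "z t + ms"]
      by (simp add: abs_le_iff)
    then show ?thesis using ct by (simp add: D_def)
  qed
  have "(\<Sum>t=1..T. c t) * p2 * D^2 = (\<Sum>t=1..T. c t * p2 * D^2)"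
    by (simp add: sum_distrib_right)
  also have "\<dots> \<le> (\<Sum>t=1..T. c t * ((sigmoid (z t + mh) - sigmoid (z t + ms)) * D))"
    by (intro sum_mono trm)
  also have "\<dots> = (LD T c dd z ms - LD T c dd z mh) * D"
    unfolding LD_diff by (simp add: sum_distrib_left sum_distrib_right mult_ac)
  also have "\<dots> \<le> LD T c dd z ms * D"
  proof -
    have "LD T c dd z mh * (ms - mh) \<le> 0"
      using foc[OF LL_deriv mh mx ms] .
    then show ?thesis by (simp add: D_def algebra_simps)
  qed
  also have "\<dots> \<le> \<bar>LD T c dd z ms\<bar> * \<bar>D\<bar>" by (simp add: abs_mult[symmetric])
  finally have st0: "(\<Sum>t=1..T. c t) * p2 * D^2 \<le> \<bar>LD T c dd z ms\<bar> * \<bar>D\<bar>" .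
  have *: "(\<Sum>t=1..T. c t) * p2 * \<bar>D\<bar> * \<bar>D\<bar> \<le> \<bar>LD T c dd z ms\<bar> * \<bar>D\<bar>"
    using st0 by (metis power2_abs power2_eq_square mult.assoc)
  show ?thesis
  proof (cases "D = 0")
    case True then show ?thesis by (simp add: D_def)
  next
    case False
    then show ?thesis using * unfolding D_def[symmetric] p2_def[symmetric]
      by (simp add: mult_le_cancel_right)
  qed
qed

lemma char_le:
  assumes c: "\<forall>t. c t \<in> {0,1}" and t: "t0 \<in> {1..T}" "c t0 = 1"
    and mh: "mh \<in> {-mb..mb}"
    and mx: "\<forall>m\<in>{-mb..mb}. LL T c dd z m \<le> LL T c dd z mh"
    and q: "-mb \<le> q" "q < mb"
  shows "mh \<le> q \<longleftrightarrow> LD T c dd z q \<le> 0"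
proof
  assume "mh \<le> q"
  show "LD T c dd z q \<le> 0"
  proof (rule ccontr)
    assume neg: "\<not> ?thesis"
    have f: "LD T c dd z mh * (mb - mh) \<le> 0" using foc[OF LL_deriv mh mx, of mb] mh by auto
    show False
    proof (cases "mh = q")
      case True then show False using f neg q by (simp add: mult_le_0_iff)
    next
      case False
      then have "LD T c dd z q < LD T c dd z mh" using LD_strict[OF c t, of mh q] \<open>mh \<le> q\<close> by simp
      then show False using f neg q \<open>mh \<le> q\<close> by (simp add: mult_le_0_iff)
    qed
  qed
next
  assume le: "LD T c dd z q \<le> 0"
  show "mh \<le> q"
  proof (rule ccontr)
    assume "\<not> mh \<le> q"
    then have "q < mh" by simp
    have f: "LD T c dd z mh * (q - mh) \<le> 0" using foc[OF LL_deriv mh mx, of q] mh q by auto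
    have "LD T c dd z mh < LD T c dd z q" using LD_strict[OF c t \<open>q < mh\<close>] .
    then show False using f le \<open>q < mh\<close> by (simp add: mult_le_0_iff)
  qed
qed



lemma gen_sigma_facts:
  fixes P :: "'a measure" and Xs :: "('a \<Rightarrow> real) set"
  defines "G \<equiv> sigma (space P) (\<Union>X\<in>Xs. {X -` B \<inter> space P | B. B \<in> sets borel})"
  shows "space G = space P" "sets G = gen_sigma P Xs"
    "X \<in> Xs \<Longrightarrow> X \<in> borel_measurable G"
    "(\<forall>X\<in>Xs. X \<in> borel_measurable P) \<Longrightarrow> subalgebra P G"
proof -
  have sub: "(\<Union>X\<in>Xs. {X -` B \<inter> space P | B. B \<in> sets borel}) \<subseteq> Pow (space P)" by auto
  show sp: "space G = space P" unfolding G_def using sub by simp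
  show st: "sets G = gen_sigma P Xs" unfolding G_def gen_sigma_def using sub by simp
  show "X \<in> borel_measurable G" if "X \<in> Xs"
  proof (rule measurableI)
    fix B :: "real set" assume "B \<in> sets borel"
    then have "X -` B \<inter> space P \<in> (\<Union>X\<in>Xs. {X -` B \<inter> space P | B. B \<in> sets borel})"
      using that by blast
    then show "X -` B \<inter> space G \<in> sets G" unfolding st sp gen_sigma_def
      by (rule sigma_sets.Basic)
  qed simp
  show "subalgebra P G" if ms: "\<forall>X\<in>Xs. X \<in> borel_measurable P"
    unfolding subalgebra_def
  proof
    have "(\<Union>X\<in>Xs. {X -` B \<inter> space P | B. B \<in> sets borel}) \<subseteq> sets P"
      using ms measurable_sets by blast
    then show "sets G \<subseteq> sets P" unfolding st gen_sigma_def
      by (rule sets.sigma_sets_subset)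
    show "space G = space P" by (rule sp)
  qed
qed

lemma cond_swap:
  fixes P F :: "'a measure"
  assumes ps: "prob_space P" and sub: "subalgebra P F"
   and Y: "Y \<in> borel_measurable F" "\<forall>\<omega>\<in>space P. \<bar>Y \<omega>\<bar> \<le> B"
   and dd: "dd \<in> borel_measurable P" "\<forall>\<omega>\<in>space P. dd \<omega> \<in> {0,1}"
   and h: "h \<in> borel_measurable F" "\<forall>\<omega>\<in>space P. \<bar>h \<omega>\<bar> \<le> 1"
   and eq: "\<forall>A\<in>sets F. measure P ({\<omega>\<in>space P. dd \<omega> = 1} \<inter> A) = (\<integral>\<omega>. indicator A \<omega> * h \<omega> \<partial>P)"
  shows "(\<integral>\<omega>. Y \<omega> * dd \<omega> \<partial>P) = (\<integral>\<omega>. Y \<omega> * h \<omega> \<partial>P)"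
proof -
  interpret prob_space P by (rule ps)
  interpret finite_measure_subalgebra P F by unfold_locales (rule sub)
  have hP: "h \<in> borel_measurable P" by (rule measurable_from_subalg[OF sub h(1)])
  have YP: "Y \<in> borel_measurable P" by (rule measurable_from_subalg[OF sub Y(1)])
  have "AE \<omega> in P. real_cond_exp P F dd \<omega> = h \<omega>"
  proof (rule real_cond_exp_charact)
    fix A assume A: "A \<in> sets F"
    then have AP: "A \<in> sets P" using sub by (auto simp: subalgebra_def)
    have S: "{\<omega>\<in>space P. dd \<omega> = 1} \<inter> A \<in> sets P" using dd(1) AP by measurable
    have "(\<integral>\<omega>\<in>A. dd \<omega> \<partial>P) = (\<integral>\<omega>. indicator ({\<omega>\<in>space P. dd \<omega> = 1} \<inter> A) \<omega> \<partial>P)"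
      unfolding set_lebesgue_integral_def
      by (rule Bochner_Integration.integral_cong[OF refl]) (use dd(2) in \<open>auto simp: indicator_def\<close>)
    also have "\<dots> = measure P ({\<omega>\<in>space P. dd \<omega> = 1} \<inter> A)" using S by simp
    also have "\<dots> = (\<integral>\<omega>\<in>A. h \<omega> \<partial>P)" using eq A unfolding set_lebesgue_integral_def by simp
    finally show "(\<integral>\<omega>\<in>A. dd \<omega> \<partial>P) = (\<integral>\<omega>\<in>A. h \<omega> \<partial>P)" .
  next
    show "integrable P dd" using dd by (intro integrable_const_bound[where B=1]) (auto intro!: AE_I2)
    show "integrable P h" using h hP by (intro integrable_const_bound[where B=1]) (auto intro!: AE_I2)
    show "h \<in> borel_measurable F" by (rule h(1))
  qed
  moreover have "integrable P (\<lambda>\<omega>. Y \<omega> * dd \<omega>)"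
  proof (rule integrable_const_bound[where B=B])
    show "AE \<omega> in P. norm (Y \<omega> * dd \<omega>) \<le> B"
    proof (rule AE_I2)
      fix \<omega> assume "\<omega> \<in> space P"
      then have a: "\<bar>Y \<omega>\<bar> \<le> B" and b: "dd \<omega> = 0 \<or> dd \<omega> = 1" using Y(2) dd(2) by auto
      from b show "norm (Y \<omega> * dd \<omega>) \<le> B" using a abs_ge_zero[of "Y \<omega>"] by auto
    qed
  qed (use YP dd in simp)
  then have "(\<integral>\<omega>. Y \<omega> * real_cond_exp P F dd \<omega> \<partial>P) = (\<integral>\<omega>. Y \<omega> * dd \<omega> \<partial>P)"
    using real_cond_exp_intg(2)[of Y dd] Y(1) dd(1) by blast
  moreover have "(\<integral>\<omega>. Y \<omega> * real_cond_exp P F dd \<omega> \<partial>P) = (\<integral>\<omega>. Y \<omega> * h \<omega> \<partial>P)"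
  proof (rule integral_cong_AE)
    have "real_cond_exp P F dd \<in> borel_measurable P"
      by (rule borel_measurable_cond_exp2)
    then show "(\<lambda>\<omega>. Y \<omega> * real_cond_exp P F dd \<omega>) \<in> borel_measurable P" using YP by measurable
    show "(\<lambda>\<omega>. Y \<omega> * h \<omega>) \<in> borel_measurable P" using YP hP by measurable
    show "AE \<omega> in P. Y \<omega> * real_cond_exp P F dd \<omega> = Y \<omega> * h \<omega>"
      using \<open>AE \<omega> in P. real_cond_exp P F dd \<omega> = h \<omega>\<close> by eventually_elim simp
  qed
  ultimately show ?thesis by simp
qed



lemma cosh_le_exp: fixes l :: real shows "(exp l + exp (- l)) / 2 \<le> exp (l^2 / 2)"
proof -
  have gen: "(exp l + exp (- l)) / 2 \<le> exp (l^2 / 2)" if l: "l \<ge> 0" for l :: real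
  proof -
    have h: "- (2*l) * (1/2) + ln (1 + (1/2) * (exp (2*l) - 1)) \<le> (2*l)^2 / 8"
      using Hoeffdings_lemma_aux[of "2*l" "1/2"] l by simp
    have g: "0 < 1 + (1/2) * (y - 1)" if "0 < y" for y :: real using that by (simp add: field_simps)
    have pos: "0 < 1 + (1/2) * (exp (2*l) - 1)" by (rule g) simp
    have "ln (1 + (1/2) * (exp (2*l) - 1)) \<le> l + l^2/2" using h by (simp add: power2_eq_square)
    then have "1 + (1/2) * (exp (2*l) - 1) \<le> exp (l + l^2/2)"
      using pos by (metis exp_le_cancel_iff exp_ln)
    moreover have "exp (l + l^2/2) = exp l * exp (l^2/2)" by (rule exp_add)
    moreover have "(1 + exp (2*l)) / 2 = 1 + (1/2) * (exp (2*l) - 1)" by (simp add: field_simps)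
    ultimately have "(1 + exp (2*l)) / 2 \<le> exp l * exp (l^2/2)" by (metis order.trans order.refl)
    moreover have "exp (2*l) = exp l * exp l" by (simp add: exp_add[symmetric])
    ultimately have "(1 + exp l * exp l) / 2 \<le> exp l * exp (l^2/2)" by simp
    then have "(1 + exp l * exp l) / 2 * exp (-l) \<le> exp l * exp (l^2/2) * exp (-l)"
      by (intro mult_right_mono) auto
    moreover have m1: "exp l * exp (-l) = 1" by (simp add: exp_minus)
    moreover have "(1 + exp l * exp l) / 2 * exp (-l) = (exp (-l) + exp l * (exp l * exp (-l))) / 2"
      by (simp add: field_simps)
    moreover have "exp l * exp (l^2/2) * exp (-l) = exp (l^2/2) * (exp l * exp (-l))"
      by (simp add: mult_ac)
    ultimately show ?thesis by (simp add: add.commute)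
  qed
  show ?thesis
  proof (cases "l \<ge> 0")
    case True then show ?thesis by (rule gen)
  next
    case False
    then have h: "(exp (- l) + exp (- (- l))) / 2 \<le> exp ((- l)^2 / 2)" by (intro gen) simp
    have e1: "exp (- (- l)) = exp l" by simp
    have e2: "(- l)^2 = l^2" by simp
    show ?thesis using h unfolding e1 e2 by (simp add: add.commute)
  qed
qed

lemma exp_chord:
  fixes l x :: real assumes "\<bar>x\<bar> \<le> 1"
  shows "exp (l * x) \<le> (exp l + exp (- l)) / 2 + x * ((exp l - exp (- l)) / 2)"
proof -
  have cv: "convex_on UNIV exp" using convex_on_exp[of 1] by simp
  define t where "t = (1 + x) / 2"
  have t: "0 \<le> t" "t \<le> 1" using assms by (auto simp: t_def)
  have "exp ((1 - t) *\<^sub>R (- l) + t *\<^sub>R l) \<le> (1 - t) * exp (- l) + t * exp l"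
    using convex_onD[OF cv, of t "-l" l] t by simp
  moreover have "(1 - t) *\<^sub>R (- l) + t *\<^sub>R l = l * x" by (simp add: t_def field_simps)
  moreover have "(1 - t) * exp (- l) + t * exp l = (exp l + exp (- l)) / 2 + x * ((exp l - exp (- l)) / 2)"
    by (simp add: t_def field_simps)
  ultimately show ?thesis by simp
qed

lemma azuma_mgf:
  fixes X :: "nat \<Rightarrow> 'a \<Rightarrow> real" and P :: "'a measure"
  assumes ps: "prob_space P"
   and meas: "\<forall>t\<in>{1..n}. X t \<in> borel_measurable P"
   and bnd: "\<forall>t\<in>{1..n}. \<forall>\<omega>\<in>space P. \<bar>X t \<omega>\<bar> \<le> 1"
   and mart: "\<forall>t\<in>{1..n}. \<forall>l. (\<integral>\<omega>. exp (l * (\<Sum>s=1..t-1. X s \<omega>)) * X t \<omega> \<partial>P) = 0"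
  shows "(\<integral>\<omega>. exp (l * (\<Sum>s=1..n. X s \<omega>)) \<partial>P) \<le> exp (l^2 * n / 2)"
  using meas bnd mart
proof (induction n)
  case 0
  interpret prob_space P by (rule ps)
  show ?case by (simp add: prob_space)
next
  case (Suc n)
  interpret prob_space P by (rule ps)
  define Sn where "Sn = (\<lambda>\<omega>. \<Sum>s=1..n. X s \<omega>)"
  define ch where "ch = (exp l + exp (- l)) / 2"
  define sh where "sh = (exp l - exp (- l)) / 2"
  have IH: "(\<integral>\<omega>. exp (l * Sn \<omega>) \<partial>P) \<le> exp (l^2 * n / 2)"
    unfolding Sn_def using Suc by auto
  have Snm: "Sn \<in> borel_measurable P" unfolding Sn_def using Suc.prems(1) by (intro borel_measurable_sum) auto
  have Xm: "X (Suc n) \<in> borel_measurable P" using Suc.prems(1) by auto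
  have Snb: "\<bar>Sn \<omega>\<bar> \<le> n" if "\<omega> \<in> space P" for \<omega>
  proof -
    have "\<bar>Sn \<omega>\<bar> \<le> (\<Sum>s=1..n. \<bar>X s \<omega>\<bar>)" unfolding Sn_def by (rule sum_abs)
    also have "\<dots> \<le> (\<Sum>s=1..n. 1)" using Suc.prems(2) that by (intro sum_mono) auto
    finally show ?thesis by simp
  qed
  have Xb: "\<bar>X (Suc n) \<omega>\<bar> \<le> 1" if "\<omega> \<in> space P" for \<omega> using Suc.prems(2) that by auto
  have ebnd: "exp (l * Sn \<omega>) \<le> exp (\<bar>l\<bar> * n)" if "\<omega> \<in> space P" for \<omega>
  proof -
    have "l * Sn \<omega> \<le> \<bar>l\<bar> * \<bar>Sn \<omega>\<bar>" by (metis abs_ge_self abs_mult)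
    also have "\<dots> \<le> \<bar>l\<bar> * n" using Snb[OF that] by (intro mult_left_mono) auto
    finally show ?thesis by simp
  qed
  have int1: "integrable P (\<lambda>\<omega>. exp (l * Sn \<omega>))"
    using Snm ebnd by (intro integrable_const_bound[where B="exp (\<bar>l\<bar> * n)"]) (auto intro!: AE_I2)
  have int2: "integrable P (\<lambda>\<omega>. exp (l * Sn \<omega>) * X (Suc n) \<omega>)"
  proof (rule integrable_const_bound[where B="exp (\<bar>l\<bar> * n)"])
    show "AE \<omega> in P. norm (exp (l * Sn \<omega>) * X (Suc n) \<omega>) \<le> exp (\<bar>l\<bar> * n)"
    proof (rule AE_I2)
      fix \<omega> assume w: "\<omega> \<in> space P"
      have i1: "exp (l * Sn \<omega>) * \<bar>X (Suc n) \<omega>\<bar> \<le> exp (l * Sn \<omega>) * 1"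
        using Xb[OF w] by (intro mult_left_mono) auto
      have a: "norm (exp (l * Sn \<omega>) * X (Suc n) \<omega>) = exp (l * Sn \<omega>) * \<bar>X (Suc n) \<omega>\<bar>" by (simp add: abs_mult)
      show "norm (exp (l * Sn \<omega>) * X (Suc n) \<omega>) \<le> exp (\<bar>l\<bar> * n)" unfolding a using i1 ebnd[OF w] by linarith
    qed
  qed (use Snm Xm in measurable)
  have int3: "integrable P (\<lambda>\<omega>. exp (l * (Sn \<omega> + X (Suc n) \<omega>)))"
  proof (rule integrable_const_bound[where B="exp (\<bar>l\<bar> * (n+1))"])
    show "AE \<omega> in P. norm (exp (l * (Sn \<omega> + X (Suc n) \<omega>))) \<le> exp (\<bar>l\<bar> * (n+1))"
    proof (rule AE_I2)
      fix \<omega> assume w: "\<omega> \<in> space P"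
      have "\<bar>Sn \<omega> + X (Suc n) \<omega>\<bar> \<le> n + 1" using Snb[OF w] Xb[OF w] by linarith
      have "l * (Sn \<omega> + X (Suc n) \<omega>) \<le> \<bar>l\<bar> * \<bar>Sn \<omega> + X (Suc n) \<omega>\<bar>" by (metis abs_ge_self abs_mult)
      also have "\<dots> \<le> \<bar>l\<bar> * (n+1)" using \<open>\<bar>Sn \<omega> + X (Suc n) \<omega>\<bar> \<le> n + 1\<close> by (intro mult_left_mono) auto
      finally have "l * (Sn \<omega> + X (Suc n) \<omega>) \<le> \<bar>l\<bar> * (n+1)" .
      then show "norm (exp (l * (Sn \<omega> + X (Suc n) \<omega>))) \<le> exp (\<bar>l\<bar> * (n+1))" by simp
    qed
  qed (use Snm Xm in measurable)
  have "(\<integral>\<omega>. exp (l * (\<Sum>s=1..Suc n - 1. X s \<omega>)) * X (Suc n) \<omega> \<partial>P) = 0"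
    using Suc.prems(3)[rule_format, of "Suc n" l] by simp
  then have mz: "(\<integral>\<omega>. exp (l * Sn \<omega>) * X (Suc n) \<omega> \<partial>P) = 0" by (simp add: Sn_def)
  have "(\<integral>\<omega>. exp (l * (\<Sum>s=1..Suc n. X s \<omega>)) \<partial>P) = (\<integral>\<omega>. exp (l * (Sn \<omega> + X (Suc n) \<omega>)) \<partial>P)"
    unfolding Sn_def by simp
  also have "\<dots> \<le> (\<integral>\<omega>. ch * exp (l * Sn \<omega>) + sh * (exp (l * Sn \<omega>) * X (Suc n) \<omega>) \<partial>P)"
  proof (rule integral_mono)
    show "integrable P (\<lambda>\<omega>. ch * exp (l * Sn \<omega>) + sh * (exp (l * Sn \<omega>) * X (Suc n) \<omega>))"
      using int1 int2 by auto
    fix \<omega> assume w: "\<omega> \<in> space P"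
    have "exp (l * (Sn \<omega> + X (Suc n) \<omega>)) = exp (l * Sn \<omega>) * exp (l * X (Suc n) \<omega>)"
      by (simp add: distrib_left exp_add)
    also have "\<dots> \<le> exp (l * Sn \<omega>) * (ch + X (Suc n) \<omega> * sh)"
      unfolding ch_def sh_def using exp_chord[OF Xb[OF w], of l] by (intro mult_left_mono) auto
    finally show "exp (l * (Sn \<omega> + X (Suc n) \<omega>)) \<le> ch * exp (l * Sn \<omega>) + sh * (exp (l * Sn \<omega>) * X (Suc n) \<omega>)"
      by (simp add: algebra_simps)
  qed (rule int3)
  also have "\<dots> = ch * (\<integral>\<omega>. exp (l * Sn \<omega>) \<partial>P) + sh * (\<integral>\<omega>. exp (l * Sn \<omega>) * X (Suc n) \<omega> \<partial>P)"
    using int1 int2 by simp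
  also have "\<dots> = ch * (\<integral>\<omega>. exp (l * Sn \<omega>) \<partial>P)" using mz by simp
  also have "\<dots> \<le> exp (l^2/2) * exp (l^2 * n / 2)"
  proof (rule mult_mono)
    show "ch \<le> exp (l^2/2)" unfolding ch_def by (rule cosh_le_exp)
  qed (use IH in \<open>auto simp: ch_def intro: add_nonneg_nonneg less_imp_le\<close>)
  also have "\<dots> = exp (l^2 * Suc n / 2)" by (simp add: exp_add[symmetric] field_simps)
  finally show ?case .
qed

lemma chernoff:
  fixes P :: "'a measure"
  assumes ps: "prob_space P" and Sm: "S \<in> borel_measurable P"
    and mgf: "\<And>l. integrable P (\<lambda>\<omega>. exp (l * S \<omega>)) \<and> (\<integral>\<omega>. exp (l * S \<omega>) \<partial>P) \<le> exp (l^2 * n / 2)"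
    and n: "n > 0" and eps: "eps > 0"
  shows "measure P {\<omega>\<in>space P. eps \<le> S \<omega>} \<le> exp (- (eps^2) / (2*n))"
proof -
  interpret prob_space P by (rule ps)
  define l where "l = eps / n"
  have l: "l > 0" using n eps by (simp add: l_def)
  have "{\<omega>\<in>space P. eps \<le> S \<omega>} = {\<omega>\<in>space P. exp (l * eps) \<le> exp (l * S \<omega>)}"
    using l by auto
  also have "measure P \<dots> \<le> (\<integral>\<omega>. exp (l * S \<omega>) \<partial>P) / exp (l * eps)"
    by (rule integral_Markov_inequality_measure[where A="space P"]) (use mgf in auto)
  also have "\<dots> \<le> exp (l^2 * n / 2) / exp (l * eps)"
    using mgf[of l] by (intro divide_right_mono) auto
  also have "\<dots> = exp (l^2 * n / 2 - l * eps)" by (simp add: exp_diff)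
  also have "l^2 * n / 2 - l * eps = - (eps^2) / (2*n)" using n by (simp add: l_def power2_eq_square field_simps)
  finally show ?thesis .
qed



lemma sigmoid_borel[measurable]: "sigmoid \<in> borel_measurable borel"
  unfolding sigmoid_def[abs_def] by measurable

lemma sum_sparse_bound:
  fixes b v :: "nat \<Rightarrow> real"
  assumes v01: "\<forall>j<M. v j \<in> {0,1}" and card: "card {j\<in>{..<M}. v j \<noteq> 0} \<le> 1"
    and b: "\<forall>j<M. \<bar>b j\<bar> \<le> bb" and bb: "0 \<le> bb"
  shows "\<bar>\<Sum>j<M. b j * v j\<bar> \<le> bb"
proof -
  define J where "J = {j\<in>{..<M}. v j \<noteq> 0}"
  have fin: "finite J" unfolding J_def by simp
  have eq: "(\<Sum>j<M. b j * v j) = (\<Sum>j\<in>J. b j * v j)"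
    unfolding J_def by (rule sum.mono_neutral_right) auto
  have cJ: "card J \<le> 1" using card unfolding J_def .
  have "J = {} \<or> (\<exists>j0. J = {j0})"
  proof (cases "card J = 0")
    case True then show ?thesis using fin by simp
  next
    case False then have "card J = 1" using cJ by linarith
    then obtain j0 where "J = {j0}" by (rule card_1_singletonE)
    then show ?thesis by blast
  qed
  then show ?thesis
  proof
    assume "J = {}" then show ?thesis using eq bb by simp
  next
    assume "\<exists>j0. J = {j0}"
    then obtain j0 where j0: "J = {j0}" by blast
    then have "j0 < M" "v j0 \<noteq> 0" unfolding J_def by auto
    then have "v j0 = 1" using v01 by auto
    then show ?thesis using eq j0 b \<open>j0 < M\<close> by simp
  qed
qed

lemma action_card:
  assumes "v \<in> action_set M"
  shows "\<forall>j<M. v j \<in> {0,1}" "card {j\<in>{..<M}. v j \<noteq> 0} \<le> 1" "\<forall>j\<ge>M. v j = 0"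
proof -
  have v: "\<forall>j. v j \<in> {0,1}" "\<forall>j\<ge>M. v j = 0" "card {j. v j \<noteq> 0} \<le> 1"
    using assms unfolding action_set_def by auto
  show "\<forall>j<M. v j \<in> {0,1}" "\<forall>j\<ge>M. v j = 0" using v by auto
  have "{j. v j \<noteq> 0} \<subseteq> {..<M}" using v(2) by (auto simp: not_less[symmetric])
  then have "finite {j. v j \<noteq> 0}" by (rule finite_subset) simp
  moreover have "{j\<in>{..<M}. v j \<noteq> 0} \<subseteq> {j. v j \<noteq> 0}" by auto
  ultimately have "card {j\<in>{..<M}. v j \<noteq> 0} \<le> card {j. v j \<noteq> 0}" by (rule card_mono)
  then show "card {j\<in>{..<M}. v j \<noteq> 0} \<le> 1" using v(3) by linarith
qed

lemma x_step:
  fixes a abar xx B Cc W bb cb wb :: real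
  assumes "\<bar>xx\<bar> \<le> (bb + cb + wb) / (1 - abar)" "0 \<le> a" "a \<le> abar" "abar < 1"
    "\<bar>B\<bar> \<le> bb" "\<bar>Cc\<bar> \<le> cb" "\<bar>W\<bar> \<le> wb"
  shows "\<bar>a * xx + B + Cc + W\<bar> \<le> (bb + cb + wb) / (1 - abar)"
proof -
  define K where "K = (bb + cb + wb) / (1 - abar)"
  have K0: "0 \<le> K" using assms(1) abs_ge_zero[of xx] unfolding K_def[symmetric] by linarith
  have eqK: "bb + cb + wb = (1 - abar) * K" using assms(4) unfolding K_def by simp
  have "\<bar>a * xx\<bar> \<le> abar * K"
    using assms(1-3) K0 unfolding K_def[symmetric] by (simp add: abs_mult mult_mono)
  then have "\<bar>a * xx + B + Cc + W\<bar> \<le> abar * K + bb + cb + wb" using assms(5-7) by linarith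
  also have "\<dots> = K" using eqK by (simp add: algebra_simps)
  finally show ?thesis unfolding K_def .
qed

lemma ind_meas:
  fixes u :: "'a \<Rightarrow> nat \<Rightarrow> real" and N :: "'a measure"
  assumes m: "\<forall>j<M. (\<lambda>\<omega>. u \<omega> j) \<in> borel_measurable N"
    and eqv: "\<forall>\<omega>\<in>space N. (u \<omega> = v \<longleftrightarrow> (\<forall>j\<in>{..<M}. u \<omega> j = v j))"
  shows "(\<lambda>\<omega>. if u \<omega> = v then 1 else 0 :: real) \<in> borel_measurable N"
proof -
  have pj: "Measurable.pred N (\<lambda>\<omega>. u \<omega> j = v j)" if "j \<in> {..<M}" for j
  proof -
    have [measurable]: "(\<lambda>\<omega>. u \<omega> j) \<in> borel_measurable N" using m that by auto
    show ?thesis by measurable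
  qed
  have pr: "Measurable.pred N (\<lambda>\<omega>. \<forall>j\<in>{..<M}. u \<omega> j = v j)"
    by (rule pred_intros_finite) (auto intro: pj)
  have me: "(\<lambda>\<omega>. if (\<forall>j\<in>{..<M}. u \<omega> j = v j) then 1 else 0 :: real) \<in> borel_measurable N"
    using pr by measurable
  have e: "\<And>\<omega>. \<omega> \<in> space N \<Longrightarrow> (if u \<omega> = v then 1 else 0::real) = (if (\<forall>j\<in>{..<M}. u \<omega> j = v j) then 1 else 0)"
    using eqv by simp
  show ?thesis by (subst measurable_cong[OF e]) (simp_all add: me)
qed


theorem mainTheorem13:
  fixes P :: "'a measure" and M T k i :: nat
    and a abar bbar cbar wbar mubar ss2 sw2 r \<delta> :: real
    and b c mus :: "nat \<Rightarrow> real"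
    and x w :: "nat \<Rightarrow> 'a \<Rightarrow> real"
    and u d :: "nat \<Rightarrow> 'a \<Rightarrow> nat \<Rightarrow> real"
    and muhat :: "'a \<Rightarrow> real"
  assumes P: "prob_space P"
    and M: "M \<ge> 1"
    and a: "0 < abar" "abar < 1" "0 \<le> a" "a \<le> abar"
    and bc: "\<forall>j<M. \<bar>b j\<bar> \<le> bbar" "\<forall>j<M. \<bar>c j\<bar> \<le> cbar"
    and mu: "0 < mubar" "\<forall>j<M. \<bar>mus j\<bar> \<le> mubar"
    and meas: "\<forall>t\<ge>1. x t \<in> borel_measurable P \<and> w t \<in> borel_measurable P \<and>
                 (\<forall>j. (\<lambda>\<omega>. u t \<omega> j) \<in> borel_measurable P \<and> (\<lambda>\<omega>. d t \<omega> j) \<in> borel_measurable P)"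
    and actions: "\<forall>t\<ge>1. \<forall>\<omega>\<in>space P. u t \<omega> \<in> action_set M"
    and d01: "\<forall>t\<ge>1. \<forall>\<omega>\<in>space P. \<forall>j<M. d t \<omega> j \<in> {0, 1}"
    and dyn: "\<forall>t\<ge>1. \<forall>\<omega>\<in>space P. x (Suc t) \<omega> =
                 a * x t \<omega> + (\<Sum>j<M. b j * u t \<omega> j) + (\<Sum>j<M. c j * d t \<omega> j) + w t \<omega>"
    and x1: "distr P borel (x 1) = distr P borel (w 1)"
    and adherence: "\<forall>t\<ge>1. \<forall>j<M. \<forall>A \<in> gen_sigma P (past_vars M x u d w t \<union> {(\<lambda>\<omega>. u t \<omega> l) | l. l < M}).
                 measure P ({\<omega>\<in>space P. d t \<omega> j = 1} \<inter> A) =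
                 (\<integral>\<omega>. indicator A \<omega> * (u t \<omega> j * sigmoid (x t \<omega> + mus j)) \<partial>P)"
    and noise_iid: "prob_space.indep_vars P (\<lambda>_. borel) w {1..}"
                   "\<forall>t\<ge>1. distr P borel (w t) = distr P borel (w 1)"
    and noise_indep: "\<forall>t\<ge>1. prob_space.indep_set P
                 (gen_sigma P (past_vars M x u d w t \<union> {(\<lambda>\<omega>. u t \<omega> l) | l. l < M}
                                \<union> {(\<lambda>\<omega>. d t \<omega> l) | l. l < M}))
                 (gen_sigma P {w t})"
    and noise_sym: "\<forall>t\<ge>1. distr P borel (\<lambda>\<omega>. - w t \<omega>) = distr P borel (w t)"
    and noise_subg: "\<forall>t\<ge>1. \<forall>s::real. integrable P (\<lambda>\<omega>. exp (s * w t \<omega>)) \<and>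
                 (\<integral>\<omega>. exp (s * w t \<omega>) \<partial>P) \<le> exp (s\<^sup>2 * ss2 / 2)"
    and noise_bdd: "0 < wbar" "\<forall>t\<ge>1. AE \<omega> in P. \<bar>w t \<omega>\<bar> \<le> wbar"
    and noise_dens: "\<forall>t\<ge>1. \<exists>f. distributed P lborel (w t) (\<lambda>z. ennreal (f z)) \<and>
                 (\<forall>z. 0 \<le> f z) \<and> log_concave f"
    and noise_var: "0 < sw2" "\<forall>t\<ge>1. prob_space.variance P (w t) = sw2"
    and expl_params: "0 < r" "r \<le> 1" "k \<ge> 1"
    and exploratory: "\<exists>(eta :: nat \<Rightarrow> 'a \<Rightarrow> nat \<Rightarrow> real) (expl :: nat \<Rightarrow> 'a \<Rightarrow> bool).
          (\<forall>t\<ge>1. {\<omega>\<in>space P. expl t \<omega>} \<in> sets P \<and> (\<forall>\<omega>\<in>space P. eta t \<omega> \<in> action_set M) \<and>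
             (\<forall>v\<in>action_set M. \<forall>A \<in> gen_sigma P (past_vars M x u d w t \<union> {(\<lambda>\<omega>. of_bool (expl t \<omega>))}).
                {\<omega>\<in>space P. eta t \<omega> = v} \<in> sets P \<and>
                measure P ({\<omega>\<in>space P. eta t \<omega> = v} \<inter> A) = measure P A / real (card (action_set M))) \<and>
             (\<forall>\<omega>\<in>space P. expl t \<omega> \<longrightarrow> u t \<omega> = eta t \<omega>)) \<and>
          (AE \<omega> in P. \<forall>j::nat. real_of_int \<lceil>r * real k\<rceil> \<le> real (card {t \<in> {j+1..j+k}. expl t \<omega>}))"
    and i: "i < M"
    and \<delta>: "0 < \<delta>" "\<delta> < 1"
    and mle: "\<forall>\<omega>\<in>space P. muhat \<omega> \<in> {-mubar..mubar} \<and>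
                 (\<forall>m\<in>{-mubar..mubar}. loglik x u d T i \<omega> m \<le> loglik x u d T i \<omega> (muhat \<omega>))"
  shows "measure P {\<omega>\<in>space P. count_treat u T i \<omega> = 0 \<or>
            \<bar>muhat \<omega> - mus i\<bar> \<le> sqrt (2 * real T * ln (2 / \<delta>)) /
              (count_treat u T i \<omega> * (sigmoid (- ((bbar + cbar + wbar) / (1 - abar)) - mubar))\<^sup>2)}
         \<ge> 1 - \<delta>"
proof -
  interpret prob_space P by (rule P)
  define ind :: "nat \<Rightarrow> 'a \<Rightarrow> real" where "ind t \<omega> = (if u t \<omega> = basis_vec i then 1 else 0)" for t \<omega>
  define X where "X t \<omega> = ind t \<omega> * (d t \<omega> i - sigmoid (x t \<omega> + mus i))" for t \<omega>
  define S where "S \<omega> = (\<Sum>t=1..T. X t \<omega>)" for \<omega>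
  define Cx where "Cx = (bbar + cbar + wbar) / (1 - abar)"
  define p where "p = sigmoid (- Cx - mubar)"
  define eps where "eps = sqrt (2 * real T * ln (2 / \<delta>))"
  define cnt where "cnt \<omega> = count_treat u T i \<omega>" for \<omega>
  define E where "E = {\<omega>\<in>space P. cnt \<omega> = 0 \<or> \<bar>muhat \<omega> - mus i\<bar> \<le> eps / (cnt \<omega> * p\<^sup>2)}"
  define Gd where "Gd = {\<omega>\<in>space P. \<bar>S \<omega>\<bar> \<le> eps}"
  have M0: "0 < M" using M by simp
  have bb0: "0 \<le> bbar" using bc(1) M0 by (metis abs_ge_zero order_trans)
  have cb0: "0 \<le> cbar" using bc(2) M0 by (metis abs_ge_zero order_trans)
  have act: "u t \<omega> \<in> action_set M" if "t \<ge> 1" "\<omega> \<in> space P" for t \<omega> using actions that by auto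
  have eqv: "(u t \<omega> = basis_vec i) \<longleftrightarrow> (\<forall>j\<in>{..<M}. u t \<omega> j = basis_vec i j)"
    if "t \<ge> 1" "\<omega> \<in> space P" for t \<omega>
  proof
    assume r: "\<forall>j\<in>{..<M}. u t \<omega> j = basis_vec i j"
    show "u t \<omega> = basis_vec i"
    proof
      fix j show "u t \<omega> j = basis_vec i j"
      proof (cases "j < M")
        case True then show ?thesis using r by auto
      next
        case False
        then have "u t \<omega> j = 0" using action_card(3)[OF act[OF that]] by auto
        moreover have "basis_vec i j = 0" using False i by (auto simp: basis_vec_def)
        ultimately show ?thesis by simp
      qed
    qed
  qed simp
  have ind01: "ind t \<omega> = 0 \<or> ind t \<omega> = 1" for t \<omega> by (simp add: ind_def)
  have ind_u: "u t \<omega> i = 1" if "ind t \<omega> \<noteq> 0" for t \<omega>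
    using that by (auto simp: ind_def basis_vec_def split: if_splits)
  have dI: "d t \<omega> i = 0 \<or> d t \<omega> i = 1" if "t \<ge> 1" "\<omega> \<in> space P" for t \<omega>
    using d01 that i by auto
  have uI: "u t \<omega> j = 0 \<or> u t \<omega> j = 1" if "t \<ge> 1" "\<omega> \<in> space P" "j < M" for t \<omega> j
    using action_card(1)[OF act[OF that(1,2)]] that(3) by auto
  have Xb: "\<bar>X t \<omega>\<bar> \<le> 1" if "t \<ge> 1" "\<omega> \<in> space P" for t \<omega>
  proof -
    have "\<bar>d t \<omega> i - sigmoid (x t \<omega> + mus i)\<bar> \<le> 1"
      using dI[OF that] sig_pos[of "x t \<omega> + mus i"] sig_lt1[of "x t \<omega> + mus i"] by auto
    then show ?thesis using ind01[of t \<omega>] unfolding X_def by auto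
  qed
  have mx[measurable]: "x t \<in> borel_measurable P" if "t \<ge> 1" for t using meas that by auto
  have muM[measurable]: "(\<lambda>\<omega>. u t \<omega> j) \<in> borel_measurable P" if "t \<ge> 1" for t j using meas that by auto
  have md[measurable]: "(\<lambda>\<omega>. d t \<omega> j) \<in> borel_measurable P" if "t \<ge> 1" for t j using meas that by auto
  have mind: "ind t \<in> borel_measurable P" if "t \<ge> 1" for t
    unfolding ind_def[abs_def]
  proof (rule ind_meas)
    show "\<forall>j<M. (\<lambda>\<omega>. u t \<omega> j) \<in> borel_measurable P" using muM that by auto
    show "\<forall>\<omega>\<in>space P. (u t \<omega> = basis_vec i) = (\<forall>j\<in>{..<M}. u t \<omega> j = basis_vec i j)"
      using eqv that by blast
  qed
  have mX: "X t \<in> borel_measurable P" if "t \<ge> 1" for t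
    unfolding X_def[abs_def] using mind[OF that] mx[OF that] md[OF that] by measurable
  have mS: "S \<in> borel_measurable P" unfolding S_def[abs_def] using mX by (intro borel_measurable_sum) auto
  have Sb: "\<bar>\<Sum>s=1..n. X s \<omega>\<bar> \<le> n" if "\<omega> \<in> space P" for n \<omega>
  proof -
    have "\<bar>\<Sum>s=1..n. X s \<omega>\<bar> \<le> (\<Sum>s=1..n. \<bar>X s \<omega>\<bar>)" by (rule sum_abs)
    also have "\<dots> \<le> (\<Sum>s=1..n. 1)" using Xb that by (intro sum_mono) auto
    finally show ?thesis by simp
  qed
  have expb: "exp (l * (\<Sum>s=1..n. X s \<omega>)) \<le> exp (\<bar>l\<bar> * n)" if "\<omega> \<in> space P" for l n \<omega>
  proof -
    have "l * (\<Sum>s=1..n. X s \<omega>) \<le> \<bar>l\<bar> * \<bar>\<Sum>s=1..n. X s \<omega>\<bar>" by (metis abs_ge_self abs_mult)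
    also have "\<dots> \<le> \<bar>l\<bar> * n" using Sb[OF that] by (intro mult_left_mono) auto
    finally show ?thesis by simp
  qed
  have mart: "\<forall>t\<in>{1..T}. \<forall>l. (\<integral>\<omega>. exp (l * (\<Sum>s=1..t-1. X s \<omega>)) * X t \<omega> \<partial>P) = 0"
  proof (intro ballI allI)
    fix t l assume t: "t \<in> {1..T}"
    then have t1: "t \<ge> 1" by simp
    define Xs where "Xs = past_vars M x u d w t \<union> {(\<lambda>\<omega>. u t \<omega> l') | l'. l' < M}"
    define G where "G = sigma (space P) (\<Union>X\<in>Xs. {X -` B \<inter> space P | B. B \<in> sets borel})"
    note GF = gen_sigma_facts[where P=P and Xs=Xs, folded G_def]
    have XsP: "\<forall>X\<in>Xs. X \<in> borel_measurable P"
      unfolding Xs_def past_vars_def hist_vars_def using t1 mx muM md meas by auto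
    have sub: "subalgebra P G" by (rule GF(4)[OF XsP])
    have gx: "x s \<in> borel_measurable G" if "s \<in> {1..t}" for s
    proof (rule GF(3))
      show "x s \<in> Xs"
      proof (cases "s = t")
        case True then show ?thesis unfolding Xs_def past_vars_def by simp
      next
        case False
        then have "1 \<le> s \<and> s \<le> t - 1" using that by auto
        then have "x s \<in> hist_vars M x u d w (t - 1)" unfolding hist_vars_def by blast
        then show ?thesis unfolding Xs_def past_vars_def by blast
      qed
    qed
    have gu: "(\<lambda>\<omega>. u s \<omega> j) \<in> borel_measurable G" if "s \<in> {1..t}" "j < M" for s j
    proof (rule GF(3))
      show "(\<lambda>\<omega>. u s \<omega> j) \<in> Xs"
      proof (cases "s = t")
        case True then show ?thesis unfolding Xs_def using that by blast
      next
        case False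
        then have "1 \<le> s \<and> s \<le> t - 1 \<and> j < M" using that by auto
        then have "(\<lambda>\<omega>. u s \<omega> j) \<in> hist_vars M x u d w (t - 1)" unfolding hist_vars_def by blast
        then show ?thesis unfolding Xs_def past_vars_def by blast
      qed
    qed
    have gd: "(\<lambda>\<omega>. d s \<omega> j) \<in> borel_measurable G" if "s \<in> {1..t-1}" "j < M" for s j
    proof (rule GF(3))
      have "1 \<le> s \<and> s \<le> t - 1 \<and> j < M" using that by auto
      then have "(\<lambda>\<omega>. d s \<omega> j) \<in> hist_vars M x u d w (t - 1)" unfolding hist_vars_def by blast
      then show "(\<lambda>\<omega>. d s \<omega> j) \<in> Xs" unfolding Xs_def past_vars_def by blast
    qed
    have gind: "ind s \<in> borel_measurable G" if "s \<in> {1..t}" for s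
      unfolding ind_def[abs_def]
    proof (rule ind_meas)
      show "\<forall>j<M. (\<lambda>\<omega>. u s \<omega> j) \<in> borel_measurable G" using gu that by auto
      show "\<forall>\<omega>\<in>space G. (u s \<omega> = basis_vec i) = (\<forall>j\<in>{..<M}. u s \<omega> j = basis_vec i j)"
        using eqv that unfolding GF(1) by auto
    qed
    have gX: "X s \<in> borel_measurable G" if "s \<in> {1..t-1}" for s
    proof -
      have "s \<in> {1..t}" using that by auto
      note [measurable] = gind[OF this] gx[OF this] gd[OF that i]
      show ?thesis unfolding X_def[abs_def] by measurable
    qed
    define Y where "Y \<omega> = exp (l * (\<Sum>s=1..t-1. X s \<omega>)) * ind t \<omega>" for \<omega>
    have gY: "Y \<in> borel_measurable G"
    proof -
      have [measurable]: "ind t \<in> borel_measurable G" using gind t by auto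
      have [measurable]: "(\<lambda>\<omega>. \<Sum>s=1..t-1. X s \<omega>) \<in> borel_measurable G"
        using gX by (intro borel_measurable_sum) auto
      show ?thesis unfolding Y_def[abs_def] by measurable
    qed
    have YP: "Y \<in> borel_measurable P" by (rule measurable_from_subalg[OF sub gY])
    have Yb: "\<bar>Y \<omega>\<bar> \<le> exp (\<bar>l\<bar> * (t-1))" if "\<omega> \<in> space P" for \<omega>
    proof -
      have "\<bar>Y \<omega>\<bar> = exp (l * (\<Sum>s=1..t-1. X s \<omega>)) * \<bar>ind t \<omega>\<bar>" unfolding Y_def by (simp add: abs_mult)
      also have "\<dots> \<le> exp (l * (\<Sum>s=1..t-1. X s \<omega>)) * 1" using ind01[of t \<omega>] by (intro mult_left_mono) auto
      also have "\<dots> \<le> exp (\<bar>l\<bar> * (t-1))" using expb[OF that, of l "t-1"] by simp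
      finally show ?thesis .
    qed
    define h where "h \<omega> = u t \<omega> i * sigmoid (x t \<omega> + mus i)" for \<omega>
    have gh: "h \<in> borel_measurable G"
    proof -
      have "t \<in> {1..t}" using t1 by simp
      note [measurable] = gu[OF this i] gx[OF this]
      show ?thesis unfolding h_def[abs_def] by measurable
    qed
    have hP: "h \<in> borel_measurable P" by (rule measurable_from_subalg[OF sub gh])
    have hb: "\<bar>h \<omega>\<bar> \<le> 1" if "\<omega> \<in> space P" for \<omega>
      using uI[OF t1 that i] sig_pos[of "x t \<omega> + mus i"] sig_lt1[of "x t \<omega> + mus i"]
      unfolding h_def by auto
    have eqA: "\<forall>A\<in>sets G. measure P ({\<omega>\<in>space P. d t \<omega> i = 1} \<inter> A) = (\<integral>\<omega>. indicator A \<omega> * h \<omega> \<partial>P)"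
      using adherence t1 i unfolding GF(2) Xs_def h_def by auto
    have swap: "(\<integral>\<omega>. Y \<omega> * d t \<omega> i \<partial>P) = (\<integral>\<omega>. Y \<omega> * h \<omega> \<partial>P)"
      by (rule cond_swap[OF P sub gY _ _ _ gh _ eqA]) (use Yb dI[OF t1] t1 hb in auto)
    have iYd: "integrable P (\<lambda>\<omega>. Y \<omega> * d t \<omega> i)"
    proof (rule integrable_const_bound[where B="exp (\<bar>l\<bar> * (t-1))"])
      show "AE \<omega> in P. norm (Y \<omega> * d t \<omega> i) \<le> exp (\<bar>l\<bar> * (t-1))"
      proof (rule AE_I2)
        fix \<omega> assume w: "\<omega> \<in> space P"
        have "\<bar>Y \<omega> * d t \<omega> i\<bar> \<le> \<bar>Y \<omega>\<bar>" using dI[OF t1 w] by (auto simp: abs_mult)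
        then show "norm (Y \<omega> * d t \<omega> i) \<le> exp (\<bar>l\<bar> * (t-1))" using Yb[OF w] by simp
      qed
    qed (use YP t1 in measurable)
    have iYh: "integrable P (\<lambda>\<omega>. Y \<omega> * h \<omega>)"
    proof (rule integrable_const_bound[where B="exp (\<bar>l\<bar> * (t-1))"])
      show "AE \<omega> in P. norm (Y \<omega> * h \<omega>) \<le> exp (\<bar>l\<bar> * (t-1))"
      proof (rule AE_I2)
        fix \<omega> assume w: "\<omega> \<in> space P"
        have "\<bar>Y \<omega> * h \<omega>\<bar> \<le> \<bar>Y \<omega>\<bar> * 1" unfolding abs_mult using hb[OF w] by (intro mult_left_mono) auto
        then show "norm (Y \<omega> * h \<omega>) \<le> exp (\<bar>l\<bar> * (t-1))" using Yb[OF w] by simp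
      qed
    qed (use YP hP in measurable)
    have "(\<integral>\<omega>. exp (l * (\<Sum>s=1..t-1. X s \<omega>)) * X t \<omega> \<partial>P) = (\<integral>\<omega>. Y \<omega> * d t \<omega> i - Y \<omega> * h \<omega> \<partial>P)"
    proof (rule Bochner_Integration.integral_cong[OF refl])
      fix \<omega> assume w: "\<omega> \<in> space P"
      show "exp (l * (\<Sum>s=1..t-1. X s \<omega>)) * X t \<omega> = Y \<omega> * d t \<omega> i - Y \<omega> * h \<omega>"
      proof (cases "ind t \<omega> = 0")
        case True then show ?thesis by (simp add: X_def Y_def)
      next
        case False
        then have "ind t \<omega> = 1" "u t \<omega> i = 1" using ind01[of t \<omega>] ind_u[OF False] by auto
        then show ?thesis by (simp add: X_def Y_def h_def algebra_simps)
      qed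
    qed
    also have "\<dots> = (\<integral>\<omega>. Y \<omega> * d t \<omega> i \<partial>P) - (\<integral>\<omega>. Y \<omega> * h \<omega> \<partial>P)"
      by (rule Bochner_Integration.integral_diff[OF iYd iYh])
    also have "\<dots> = 0" using swap by simp
    finally show "(\<integral>\<omega>. exp (l * (\<Sum>s=1..t-1. X s \<omega>)) * X t \<omega> \<partial>P) = 0" .
  qed
  have mgf: "integrable P (\<lambda>\<omega>. exp (l * S \<omega>)) \<and> (\<integral>\<omega>. exp (l * S \<omega>) \<partial>P) \<le> exp (l^2 * real T / 2)" for l
  proof
    show "integrable P (\<lambda>\<omega>. exp (l * S \<omega>))"
    proof (rule integrable_const_bound[where B="exp (\<bar>l\<bar> * T)"])
      show "AE \<omega> in P. norm (exp (l * S \<omega>)) \<le> exp (\<bar>l\<bar> * T)"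
        using expb[of _ l T] by (auto intro!: AE_I2 simp: S_def)
    qed (use mS in measurable)
    show "(\<integral>\<omega>. exp (l * S \<omega>) \<partial>P) \<le> exp (l^2 * real T / 2)"
      unfolding S_def by (rule azuma_mgf[OF P _ _ mart]) (use mX Xb in auto)
  qed
  have probGd: "prob Gd \<ge> 1 - \<delta>"
  proof (cases "T = 0")
    case True
    then have "Gd = space P" unfolding Gd_def S_def eps_def by auto
    then show ?thesis using \<delta> by (simp add: prob_space)
  next
    case False
    then have Tp: "real T > 0" by simp
    have "1 < 2 / \<delta>" using \<delta> by (simp add: field_simps)
    then have lnp: "ln (2 / \<delta>) > 0" by (rule ln_gt_zero)
    have eps_pos: "eps > 0" unfolding eps_def using Tp lnp by simp
    have eps2: "eps^2 = 2 * real T * ln (2 / \<delta>)" unfolding eps_def using Tp lnp by simp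
    have ex: "exp (- (eps^2) / (2 * real T)) = \<delta> / 2"
    proof -
      have "- (eps^2) / (2 * real T) = - ln (2 / \<delta>)" using eps2 Tp by simp
      moreover have "exp (- ln (2 / \<delta>)) = inverse (2 / \<delta>)" using \<delta> by (simp add: exp_minus)
      ultimately show ?thesis by simp
    qed
    have A1: "prob {\<omega>\<in>space P. eps \<le> S \<omega>} \<le> \<delta> / 2"
      using chernoff[OF P mS mgf Tp eps_pos] ex by simp
    have mS': "(\<lambda>\<omega>. - S \<omega>) \<in> borel_measurable P" using mS by measurable
    have mgf': "integrable P (\<lambda>\<omega>. exp (l * (- S \<omega>))) \<and> (\<integral>\<omega>. exp (l * (- S \<omega>)) \<partial>P) \<le> exp (l^2 * real T / 2)" for l
      using mgf[of "- l"] by simp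
    have A2: "prob {\<omega>\<in>space P. eps \<le> - S \<omega>} \<le> \<delta> / 2"
      using chernoff[OF P mS' mgf' Tp eps_pos] ex by simp
    have GdE: "Gd \<in> events" unfolding Gd_def using mS by measurable
    have sub: "space P - Gd \<subseteq> {\<omega>\<in>space P. eps \<le> S \<omega>} \<union> {\<omega>\<in>space P. eps \<le> - S \<omega>}"
      unfolding Gd_def by auto
    have "prob (space P - Gd) \<le> prob ({\<omega>\<in>space P. eps \<le> S \<omega>} \<union> {\<omega>\<in>space P. eps \<le> - S \<omega>})"
      by (rule finite_measure_mono[OF sub]) (use mS in measurable)
    also have "\<dots> \<le> prob {\<omega>\<in>space P. eps \<le> S \<omega>} + prob {\<omega>\<in>space P. eps \<le> - S \<omega>}"
      by (rule measure_Un_le) (use mS in measurable)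
    also have "\<dots> \<le> \<delta>" using A1 A2 by simp
    finally have "prob (space P - Gd) \<le> \<delta>" .
    moreover have "prob (space P - Gd) = 1 - prob Gd" by (rule prob_compl[OF GdE])
    ultimately show ?thesis by linarith
  qed
  have AEw: "AE \<omega> in P. \<forall>t. t \<ge> 1 \<longrightarrow> \<bar>w t \<omega>\<bar> \<le> wbar"
    unfolding AE_all_countable
  proof
    fix t :: nat
    show "AE \<omega> in P. t \<ge> 1 \<longrightarrow> \<bar>w t \<omega>\<bar> \<le> wbar"
    proof (cases "t \<ge> 1")
      case True
      then have "AE \<omega> in P. \<bar>w t \<omega>\<bar> \<le> wbar" using noise_bdd(2) by auto
      then show ?thesis by eventually_elim simp
    qed simp
  qed
  have mw1: "w 1 \<in> borel_measurable P" using meas by auto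
  have mx1: "x 1 \<in> borel_measurable P" using meas by auto
  have Bset: "{z::real. wbar < \<bar>z\<bar>} \<in> sets borel" by measurable
  have AEx1: "AE \<omega> in P. \<bar>x 1 \<omega>\<bar> \<le> wbar"
  proof -
    have s1: "x 1 -` {z::real. wbar < \<bar>z\<bar>} \<inter> space P = {\<omega>\<in>space P. wbar < \<bar>x 1 \<omega>\<bar>}" by auto
    have s2: "w 1 -` {z::real. wbar < \<bar>z\<bar>} \<inter> space P = {\<omega>\<in>space P. wbar < \<bar>w 1 \<omega>\<bar>}" by auto
    have "measure P {\<omega>\<in>space P. wbar < \<bar>x 1 \<omega>\<bar>} = measure (distr P borel (x 1)) {z. wbar < \<bar>z\<bar>}"
      using measure_distr[OF mx1 Bset] s1 by simp
    also have "\<dots> = measure (distr P borel (w 1)) {z. wbar < \<bar>z\<bar>}" using x1 by simp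
    also have "\<dots> = measure P {\<omega>\<in>space P. wbar < \<bar>w 1 \<omega>\<bar>}"
      using measure_distr[OF mw1 Bset] s2 by simp
    also have "\<dots> = 0"
    proof -
      have ae: "AE \<omega> in P. \<bar>w 1 \<omega>\<bar> \<le> wbar" using noise_bdd(2) by auto
      have se: "{\<omega>\<in>space P. \<not> \<bar>w 1 \<omega>\<bar> \<le> wbar} = {\<omega>\<in>space P. wbar < \<bar>w 1 \<omega>\<bar>}" by auto
      have N2: "{\<omega>\<in>space P. wbar < \<bar>w 1 \<omega>\<bar>} \<in> sets P" using mw1 by measurable
      have "emeasure P {\<omega>\<in>space P. wbar < \<bar>w 1 \<omega>\<bar>} = 0"
        using AE_iff_measurable[OF N2 se] ae by simp
      then show ?thesis by (simp add: measure_def)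
    qed
    finally have m0: "measure P {\<omega>\<in>space P. wbar < \<bar>x 1 \<omega>\<bar>} = 0" .
    have N1: "{\<omega>\<in>space P. wbar < \<bar>x 1 \<omega>\<bar>} \<in> sets P" using mx1 by measurable
    have se: "{\<omega>\<in>space P. \<not> \<bar>x 1 \<omega>\<bar> \<le> wbar} = {\<omega>\<in>space P. wbar < \<bar>x 1 \<omega>\<bar>}" by auto
    have em: "emeasure P {\<omega>\<in>space P. wbar < \<bar>x 1 \<omega>\<bar>} = 0"
      using m0 N1 by (simp add: emeasure_eq_measure)
    show ?thesis using AE_iff_measurable[OF N1 se] em by simp
  qed
  have AEdu1: "AE \<omega> in P. d t \<omega> j = 1 \<longrightarrow> u t \<omega> j = 1" if t: "t \<ge> 1" and j: "j < M" for t j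
  proof -
    define A where "A = {\<omega>\<in>space P. u t \<omega> j = 0}"
    have Aeq: "A = (\<lambda>\<omega>. u t \<omega> j) -` {0} \<inter> space P" unfolding A_def by auto
    have z: "{0::real} \<in> sets borel" by simp
    have inX: "(\<lambda>\<omega>. u t \<omega> j) \<in> past_vars M x u d w t \<union> {(\<lambda>\<omega>. u t \<omega> l) | l. l < M}" using j by blast
    have "A \<in> (\<Union>X\<in>past_vars M x u d w t \<union> {(\<lambda>\<omega>. u t \<omega> l) | l. l < M}. {X -` B \<inter> space P | B. B \<in> sets borel})"
      unfolding Aeq using inX z by blast
    then have AG: "A \<in> gen_sigma P (past_vars M x u d w t \<union> {(\<lambda>\<omega>. u t \<omega> l) | l. l < M})"
      unfolding gen_sigma_def by (rule sigma_sets.Basic)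
    have "measure P ({\<omega>\<in>space P. d t \<omega> j = 1} \<inter> A) = (\<integral>\<omega>. indicator A \<omega> * (u t \<omega> j * sigmoid (x t \<omega> + mus j)) \<partial>P)"
      using adherence t j AG by auto
    also have "\<dots> = (\<integral>\<omega>. 0 \<partial>P)"
      by (rule Bochner_Integration.integral_cong[OF refl]) (auto simp: A_def indicator_def)
    finally have m0: "measure P ({\<omega>\<in>space P. d t \<omega> j = 1} \<inter> A) = 0" by simp
    have NS: "{\<omega>\<in>space P. d t \<omega> j = 1} \<inter> A \<in> sets P" unfolding A_def using md[OF t] muM[OF t] by measurable
    have se: "{\<omega>\<in>space P. \<not> (d t \<omega> j = 1 \<longrightarrow> u t \<omega> j = 1)} = {\<omega>\<in>space P. d t \<omega> j = 1} \<inter> A"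
      unfolding A_def using uI[OF t _ j] by auto
    have em: "emeasure P ({\<omega>\<in>space P. d t \<omega> j = 1} \<inter> A) = 0"
      using m0 NS by (simp add: emeasure_eq_measure)
    show ?thesis using AE_iff_measurable[OF NS se] em by simp
  qed
  have "\<forall>t j. AE \<omega> in P. (t \<ge> 1 \<and> j < M) \<longrightarrow> (d t \<omega> j = 1 \<longrightarrow> u t \<omega> j = 1)"
  proof (intro allI)
    fix t j :: nat
    show "AE \<omega> in P. (t \<ge> 1 \<and> j < M) \<longrightarrow> (d t \<omega> j = 1 \<longrightarrow> u t \<omega> j = 1)"
    proof (cases "t \<ge> 1 \<and> j < M")
      case True
      then have "AE \<omega> in P. d t \<omega> j = 1 \<longrightarrow> u t \<omega> j = 1" using AEdu1 by auto
      then show ?thesis by eventually_elim simp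
    next
      case False then show ?thesis by (intro AE_I2) auto
    qed
  qed
  then have AEdu: "AE \<omega> in P. \<forall>t j. (t \<ge> 1 \<and> j < M) \<longrightarrow> (d t \<omega> j = 1 \<longrightarrow> u t \<omega> j = 1)"
    by (simp add: AE_all_countable)
  have wC: "wbar \<le> Cx"
  proof -
    have "0 \<le> wbar * abar" using noise_bdd(1) a by simp
    then have "wbar * (1 - abar) \<le> bbar + cbar + wbar" using bb0 cb0 by (simp add: algebra_simps)
    then show ?thesis unfolding Cx_def using a by (simp add: pos_le_divide_eq)
  qed
  have AEx: "AE \<omega> in P. \<forall>t\<ge>1. \<bar>x t \<omega>\<bar> \<le> Cx"
    using AEw AEx1 AEdu AE_space
  proof eventually_elim
    case (elim \<omega>)
    show ?case
    proof (intro allI impI)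
      fix t :: nat assume "t \<ge> 1"
      then show "\<bar>x t \<omega>\<bar> \<le> Cx"
      proof (induction t rule: nat_induct_at_least)
        case base
        then show ?case using elim(2) wC by simp
      next
        case (Suc n)
        have w: "\<omega> \<in> space P" using elim(4) .
        have xs: "x (Suc n) \<omega> = a * x n \<omega> + (\<Sum>j<M. b j * u n \<omega> j) + (\<Sum>j<M. c j * d n \<omega> j) + w n \<omega>"
          using dyn Suc.hyps w by auto
        note ac = action_card[OF act[OF Suc.hyps w]]
        have B: "\<bar>\<Sum>j<M. b j * u n \<omega> j\<bar> \<le> bbar" by (rule sum_sparse_bound[OF ac(1) ac(2) bc(1) bb0])
        have Cc: "\<bar>\<Sum>j<M. c j * d n \<omega> j\<bar> \<le> cbar"
        proof (rule sum_sparse_bound[OF _ _ bc(2) cb0])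
          show "\<forall>j<M. d n \<omega> j \<in> {0,1}" using d01 Suc.hyps w by auto
          have "{j\<in>{..<M}. d n \<omega> j \<noteq> 0} \<subseteq> {j\<in>{..<M}. u n \<omega> j \<noteq> 0}"
          proof
            fix j assume "j \<in> {j\<in>{..<M}. d n \<omega> j \<noteq> 0}"
            then have "j < M" "d n \<omega> j \<noteq> 0" by auto
            then have "d n \<omega> j = 1" using d01 Suc.hyps w by auto
            then have "u n \<omega> j = 1" using elim(3) Suc.hyps \<open>j < M\<close> by auto
            then show "j \<in> {j\<in>{..<M}. u n \<omega> j \<noteq> 0}" using \<open>j < M\<close> by auto
          qed
          then have "card {j\<in>{..<M}. d n \<omega> j \<noteq> 0} \<le> card {j\<in>{..<M}. u n \<omega> j \<noteq> 0}"
            by (rule card_mono[rotated]) simp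
          then show "card {j\<in>{..<M}. d n \<omega> j \<noteq> 0} \<le> 1" using ac(2) by linarith
        qed
        have W: "\<bar>w n \<omega>\<bar> \<le> wbar" using elim(1) Suc.hyps by auto
        have IH: "\<bar>x n \<omega>\<bar> \<le> (bbar + cbar + wbar) / (1 - abar)" using Suc.IH unfolding Cx_def .
        show ?case unfolding xs Cx_def by (rule x_step[OF IH a(3) a(4) a(2) B Cc W])
      qed
    qed
  qed
  have cnt_eq: "cnt = (\<lambda>\<omega>. \<Sum>t=1..T. ind t \<omega>)"
    by (rule ext) (simp add: cnt_def count_treat_def ind_def)
  have mcnt[measurable]: "cnt \<in> borel_measurable P"
    unfolding cnt_eq using mind by (intro borel_measurable_sum) auto
  define LDw where "LDw q \<omega> = LD T (\<lambda>t. ind t \<omega>) (\<lambda>t. d t \<omega> i) (\<lambda>t. x t \<omega>) q" for q \<omega>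
  have mLD: "LDw q \<in> borel_measurable P" for q
  proof -
    have "(\<lambda>\<omega>. \<Sum>t=1..T. ind t \<omega> * (d t \<omega> i - sigmoid (x t \<omega> + q))) \<in> borel_measurable P"
    proof (rule borel_measurable_sum)
      fix t assume "t \<in> {1..T}"
      then have t1: "t \<ge> 1" by simp
      note [measurable] = mind[OF t1] mx[OF t1] md[OF t1]
      show "(\<lambda>\<omega>. ind t \<omega> * (d t \<omega> i - sigmoid (x t \<omega> + q))) \<in> borel_measurable P" by measurable
    qed
    moreover have "LDw q = (\<lambda>\<omega>. \<Sum>t=1..T. ind t \<omega> * (d t \<omega> i - sigmoid (x t \<omega> + q)))"
      by (rule ext) (simp add: LDw_def LD_def)
    ultimately show ?thesis by simp
  qed
  have LLw: "loglik x u d T i \<omega> m = LL T (\<lambda>t. ind t \<omega>) (\<lambda>t. d t \<omega> i) (\<lambda>t. x t \<omega>) m" for \<omega> m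
    unfolding loglik_def LL_def ind_def by simp
  have c01: "\<forall>t. ind t \<omega> \<in> {0,1}" for \<omega> using ind01 by auto
  have mhI: "muhat \<omega> \<in> {-mubar..mubar}" if "\<omega> \<in> space P" for \<omega> using mle that by auto
  have mhmax: "\<forall>m\<in>{-mubar..mubar}. LL T (\<lambda>t. ind t \<omega>) (\<lambda>t. d t \<omega> i) (\<lambda>t. x t \<omega>) m
      \<le> LL T (\<lambda>t. ind t \<omega>) (\<lambda>t. d t \<omega> i) (\<lambda>t. x t \<omega>) (muhat \<omega>)" if "\<omega> \<in> space P" for \<omega>
    using mle that unfolding LLw by auto
  have cnt_t0: "\<exists>t0\<in>{1..T}. ind t0 \<omega> = 1" if "cnt \<omega> \<noteq> 0" for \<omega>
  proof (rule ccontr)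
    assume "\<not> ?thesis"
    then have "\<forall>t\<in>{1..T}. ind t \<omega> = 0" using ind01 by blast
    then have "cnt \<omega> = 0" unfolding cnt_eq by simp
    then show False using that by simp
  qed
  define mh' where "mh' \<omega> = (if cnt \<omega> = 0 then 0 else muhat \<omega>)" for \<omega>
  have mmh[measurable]: "mh' \<in> borel_measurable P"
    unfolding borel_measurable_iff_le
  proof
    fix q
    have "{\<omega>\<in>space P. mh' \<omega> \<le> q} = {\<omega>\<in>space P. (cnt \<omega> = 0 \<and> 0 \<le> q) \<or>
        (cnt \<omega> \<noteq> 0 \<and> (mubar \<le> q \<or> (- mubar \<le> q \<and> LDw q \<omega> \<le> 0)))}"
    proof (rule Collect_cong)
      fix \<omega>
      show "(\<omega> \<in> space P \<and> mh' \<omega> \<le> q) = (\<omega> \<in> space P \<and> ((cnt \<omega> = 0 \<and> 0 \<le> q) \<or>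
        (cnt \<omega> \<noteq> 0 \<and> (mubar \<le> q \<or> (- mubar \<le> q \<and> LDw q \<omega> \<le> 0)))))"
      proof (cases "\<omega> \<in> space P \<and> cnt \<omega> \<noteq> 0")
        case False then show ?thesis by (auto simp: mh'_def)
      next
        case True
        then have w: "\<omega> \<in> space P" and cn: "cnt \<omega> \<noteq> 0" by auto
        obtain t0 where t0: "t0 \<in> {1..T}" "ind t0 \<omega> = 1" using cnt_t0[OF cn] by blast
        have "muhat \<omega> \<le> q \<longleftrightarrow> (mubar \<le> q \<or> (- mubar \<le> q \<and> LDw q \<omega> \<le> 0))"
        proof (cases "mubar \<le> q")
          case True then show ?thesis using mhI[OF w] by auto
        next
          case False
          show ?thesis
          proof (cases "- mubar \<le> q")
            case True
            have "muhat \<omega> \<le> q \<longleftrightarrow> LDw q \<omega> \<le> 0" unfolding LDw_def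
              by (rule char_le[OF c01 t0 mhI[OF w] mhmax[OF w] True]) (use False in simp)
            then show ?thesis using False True by simp
          next
            case False2: False
            then show ?thesis using False mhI[OF w] by auto
          qed
        qed
        then show ?thesis using w cn by (simp add: mh'_def)
      qed
    qed
    also have "\<dots> \<in> sets P" using mLD[of q] by measurable
    finally show "{\<omega>\<in>space P. mh' \<omega> \<le> q} \<in> sets P" .
  qed
  have Eeq: "E = {\<omega>\<in>space P. cnt \<omega> = 0 \<or> \<bar>mh' \<omega> - mus i\<bar> \<le> eps / (cnt \<omega> * p\<^sup>2)}"
    unfolding E_def mh'_def by auto
  have EE: "E \<in> events" unfolding Eeq by measurable
  have ppos: "0 < p" unfolding p_def by (rule sig_pos)
  have AEE: "AE \<omega> in P. \<omega> \<in> Gd \<longrightarrow> \<omega> \<in> E"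
    using AEx AE_space
  proof eventually_elim
    case (elim \<omega>)
    show ?case
    proof
      assume "\<omega> \<in> Gd"
      then have Sw: "\<bar>S \<omega>\<bar> \<le> eps" unfolding Gd_def by auto
      show "\<omega> \<in> E"
      proof (cases "cnt \<omega> = 0")
        case True then show ?thesis unfolding E_def using elim(2) by auto
      next
        case False
        have zb: "\<forall>t\<in>{1..T}. ind t \<omega> \<noteq> 0 \<longrightarrow> \<bar>x t \<omega>\<bar> \<le> Cx" using elim(1) by auto
        have ms: "mus i \<in> {-mubar..mubar}" using mu(2) i by auto
        have mb: "(\<Sum>t=1..T. ind t \<omega>) * (sigmoid (- Cx - mubar))^2 * \<bar>muhat \<omega> - mus i\<bar>
            \<le> \<bar>LD T (\<lambda>t. ind t \<omega>) (\<lambda>t. d t \<omega> i) (\<lambda>t. x t \<omega>) (mus i)\<bar>"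
          by (rule main_bound[OF c01 zb ms mhI[OF elim(2)] mhmax[OF elim(2)]])
        have "LD T (\<lambda>t. ind t \<omega>) (\<lambda>t. d t \<omega> i) (\<lambda>t. x t \<omega>) (mus i) = S \<omega>"
          unfolding LD_def S_def X_def by simp
        then have le: "cnt \<omega> * p^2 * \<bar>muhat \<omega> - mus i\<bar> \<le> eps"
          using mb Sw unfolding cnt_eq p_def by simp
        have "cnt \<omega> \<ge> 0" unfolding cnt_eq using ind01 by (intro sum_nonneg) (metis order_refl zero_le_one)
        then have cpos: "cnt \<omega> > 0" using False by simp
        have "0 < cnt \<omega> * p^2" using cpos ppos by simp
        then have "\<bar>muhat \<omega> - mus i\<bar> \<le> eps / (cnt \<omega> * p\<^sup>2)"
          using le by (simp add: pos_le_divide_eq mult_ac)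
        then show ?thesis unfolding E_def using elim(2) by auto
      qed
    qed
  qed
  have "prob Gd \<le> prob E" by (rule finite_measure_mono_AE[OF AEE EE])
  then have "1 - \<delta> \<le> prob E" using probGd by linarith
  then show ?thesis unfolding E_def cnt_def eps_def p_def Cx_def .
qed


end
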